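(* Let $X$ be a bornological coarse space with bornology $\mathcal{B}$, and let $\bar X$ be a Higson-dominated compactification of $X$ with boundary $Y$. Suppose given a neighbourhood $U$ of $Y$ in $\bar X$ with a retraction $r\colon U\to Y$, a proper, bornological and controlled function $s\colon X\to[0,\infty)$, and a point $y_0\in Y$. Define $\psi\colon X\to[0,\infty)\times Y$ by $\psi(x):=(s(x),y_0)$ if $x\notin p^{-1}(U)$ and $\psi(x):=(s(x),r(p(x)))$ if $x\in p^{-1}(U)$. Then $\psi\colon X\to\mathcal{O}(Y)$ is a morphism of bornological coarse spaces.
   Context: A bornological coarse space is a set with a coarse structure and compatible bornology; morphisms are controlled (images of entourages are entourages) and proper (preimages of bounded sets are bounded). Let $\ell^\infty_{\mathcal{B}}(X)$ be the $C^*$-algebra of bounded functions $f$ on $X$ such that for every entourage $U$, $\sup\{|f(x)-f(x')|:(x,x')\in U,\ x,x'\notin B\}\to0$ along bounded $B$, and $\ell^\infty(\mathcal{B})$ the ideal of bounded functions with $\sup_{X\setminus B}|f|\to0$ along bounded $B$. A Higson-dominated compactification is given by a closed unital subalgebra $A$ with $\ell^\infty(\mathcal{B})\subseteq A\subseteq\ell^\infty_{\mathcal{B}}(X)$: $\bar X$ is the Gelfand dual of $A$ (a compact Hausdorff space), the boundary $Y$ is the Gelfand dual of $A/\ell^\infty(\mathcal{B})$ (a closed subspace of $\bar X$), and $p\colon X\to\bar X$ sends $x$ to the character $f\mapsto f(x)$. A function $s\colon X\to[0,\infty)$ is proper if preimages of bounded sets are bounded, bornological if images of bounded sets are bounded,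 and controlled if $\sup_{(x,x')\in W}|s(x)-s(x')|<\infty$ for every entourage $W$. $Y$ carries the maximal coarse structure and bornology and the uniform structure of all neighbourhoods of the diagonal. $\mathcal{O}(Y)$ is $[0,\infty)\times Y$ with the bornology whose bounded sets are those contained in $[0,R]\times Y$ for some $R$, and whose entourages are the subsets $U$ of $([0,\infty)\times Y)^2$ with $\sup_{((t,y),(t',y'))\in U}|t-t'|<\infty$ such that for every neighbourhood $V$ of the diagonal of $Y$ there is $S$ with $(y,y')\in V$ whenever $((t,y),(t',y'))\in U$ and $t,t'\ge S$. *)

theory Defs
  imports "HOL-Analysis.Analysis"
begin

text \<open>The bornological coarse space X is the whole type 'a.\<close>

definition coarse_structure :: "('a \<times> 'a) set set \<Rightarrow> bool" where
  "coarse_structure C \<longleftrightarrow> Id \<in> C \<and> (\<forall>U\<in>C. \<forall>V. V \<subseteq> U \<longrightarrow> V \<in> C)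
     \<and> (\<forall>U\<in>C. \<forall>V\<in>C. U \<union> V \<in> C \<and> U O V \<in> C) \<and> (\<forall>U\<in>C. converse U \<in> C)"

definition bornology :: "'a set set \<Rightarrow> bool" where
  "bornology B \<longleftrightarrow> (\<forall>x. \<exists>b\<in>B. x \<in> b) \<and> (\<forall>b\<in>B. \<forall>b'. b' \<subseteq> b \<longrightarrow> b' \<in> B)
     \<and> (\<forall>b\<in>B. \<forall>b'\<in>B. b \<union> b' \<in> B)"

definition bornological_coarse_space :: "('a \<times> 'a) set set \<Rightarrow> 'a set set \<Rightarrow> bool" where
  "bornological_coarse_space C B \<longleftrightarrow> coarse_structure C \<and> bornology B
     \<and> (\<forall>U\<in>C. \<forall>b\<in>B. U `` b \<in> B)"

definition bounded_fun :: "('a \<Rightarrow> complex) \<Rightarrow> bool" where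
  "bounded_fun f \<longleftrightarrow> (\<exists>M. \<forall>x. cmod (f x) \<le> M)"

text \<open>\<open>\<ell>\<^sup>\<infinity>\<^sub>B(X)\<close>: the limit along the directed set of bounded sets is unfolded
  (the sup is antitone in the bounded set).\<close>
definition linfty_higson :: "('a \<times> 'a) set set \<Rightarrow> 'a set set \<Rightarrow> ('a \<Rightarrow> complex) set" where
  "linfty_higson C B = {f. bounded_fun f \<and>
     (\<forall>U\<in>C. \<forall>\<epsilon>>0. \<exists>b\<in>B. \<forall>x x'. (x, x') \<in> U \<and> x \<notin> b \<and> x' \<notin> b \<longrightarrow> cmod (f x - f x') \<le> \<epsilon>)}"

definition linfty_vanish :: "'a set set \<Rightarrow> ('a \<Rightarrow> complex) set" where
  "linfty_vanish B = {f. bounded_fun f \<and> (\<forall>\<epsilon>>0. \<exists>b\<in>B. \<forall>x. x \<notin> b \<longrightarrow> cmod (f x) \<le> \<epsilon>)}"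

definition closed_unital_subalgebra :: "('a \<Rightarrow> complex) set \<Rightarrow> bool" where
  "closed_unital_subalgebra A \<longleftrightarrow> (\<lambda>_. 1) \<in> A
     \<and> (\<forall>f\<in>A. \<forall>g\<in>A. (\<lambda>x. f x + g x) \<in> A \<and> (\<lambda>x. f x * g x) \<in> A)
     \<and> (\<forall>c. \<forall>f\<in>A. (\<lambda>x. c * f x) \<in> A)
     \<and> (\<forall>f\<in>A. (\<lambda>x. cnj (f x)) \<in> A)
     \<and> (\<forall>f. (\<forall>\<epsilon>>0. \<exists>g\<in>A. \<forall>x. cmod (f x - g x) \<le> \<epsilon>) \<longrightarrow> f \<in> A)"

definition higson_dominated :: "('a \<times> 'a) set set \<Rightarrow> 'a set set \<Rightarrow> ('a \<Rightarrow> complex) set \<Rightarrow> bool" where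
  "higson_dominated C B A \<longleftrightarrow> closed_unital_subalgebra A
     \<and> linfty_vanish B \<subseteq> A \<and> A \<subseteq> linfty_higson C B"

text \<open>Gelfand dual: characters of A (extensional outside A) with the weak-* topology.\<close>
definition characters :: "('a \<Rightarrow> complex) set \<Rightarrow> (('a \<Rightarrow> complex) \<Rightarrow> complex) set" where
  "characters A = {\<phi> \<in> PiE A (\<lambda>_. UNIV). \<phi> (\<lambda>_. 1) = 1
     \<and> (\<forall>f\<in>A. \<forall>g\<in>A. \<phi> (\<lambda>x. f x + g x) = \<phi> f + \<phi> g \<and> \<phi> (\<lambda>x. f x * g x) = \<phi> f * \<phi> g)
     \<and> (\<forall>c. \<forall>f\<in>A. \<phi> (\<lambda>x. c * f x) = c * \<phi> f)}"

definition gelfand_top :: "('a \<Rightarrow> complex) set \<Rightarrow> (('a \<Rightarrow> complex) \<Rightarrow> complex) topology" where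
  "gelfand_top A = subtopology (product_topology (\<lambda>_. euclidean) A) (characters A)"

text \<open>Gelfand dual of \<open>A/\<ell>\<^sup>\<infinity>(B)\<close>, as the closed subspace of characters vanishing on the ideal.\<close>
definition boundary :: "('a \<Rightarrow> complex) set \<Rightarrow> 'a set set \<Rightarrow> (('a \<Rightarrow> complex) \<Rightarrow> complex) set" where
  "boundary A B = {\<phi> \<in> characters A. \<forall>f\<in>linfty_vanish B. \<phi> f = 0}"

definition eval_char :: "('a \<Rightarrow> complex) set \<Rightarrow> 'a \<Rightarrow> (('a \<Rightarrow> complex) \<Rightarrow> complex)" where
  "eval_char A x = restrict (\<lambda>f. f x) A"

definition nbhd_in :: "'b topology \<Rightarrow> 'b set \<Rightarrow> 'b set \<Rightarrow> bool" where
  "nbhd_in T S U \<longleftrightarrow> U \<subseteq> topspace T \<and> (\<exists>W. openin T W \<and> S \<subseteq> W \<and> W \<subseteq> U)"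

text \<open>Neighbourhoods of the diagonal of a (compact Hausdorff) space: its uniform structure.\<close>
definition diag_nbhds :: "'b topology \<Rightarrow> ('b \<times> 'b) set set" where
  "diag_nbhds T = {V. nbhd_in (prod_topology T T) (Id_on (topspace T)) V}"

definition cone_carrier :: "'b topology \<Rightarrow> (real \<times> 'b) set" where
  "cone_carrier T = {0..} \<times> topspace T"

definition cone_bornology :: "'b topology \<Rightarrow> (real \<times> 'b) set set" where
  "cone_bornology T = {b. \<exists>R. b \<subseteq> {0..R} \<times> topspace T}"

definition cone_coarse :: "'b topology \<Rightarrow> ((real \<times> 'b) \<times> (real \<times> 'b)) set set" where
  "cone_coarse T = {U. U \<subseteq> cone_carrier T \<times> cone_carrier T
     \<and> (\<exists>c. \<forall>((t, y), (t', y')) \<in> U. \<bar>t - t'\<bar> \<le> c)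
     \<and> (\<forall>V\<in>diag_nbhds T. \<exists>S. \<forall>((t, y), (t', y')) \<in> U. t \<ge> S \<and> t' \<ge> S \<longrightarrow> (y, y') \<in> V)}"

definition bc_morphism :: "('a \<times> 'a) set set \<Rightarrow> 'a set set \<Rightarrow> 'c set \<Rightarrow> ('c \<times> 'c) set set \<Rightarrow> 'c set set
     \<Rightarrow> ('a \<Rightarrow> 'c) \<Rightarrow> bool" where
  "bc_morphism C B Z CZ BZ f \<longleftrightarrow> (\<forall>x. f x \<in> Z)
     \<and> (\<forall>U\<in>C. (\<lambda>(a, b). (f a, f b)) ` U \<in> CZ)
     \<and> (\<forall>b\<in>BZ. f -` b \<in> B)"

definition proper_fun :: "'a set set \<Rightarrow> ('a \<Rightarrow> real) \<Rightarrow> bool" where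
  "proper_fun B s \<longleftrightarrow> (\<forall>R. {x. s x \<le> R} \<in> B)"

definition bornological_fun :: "'a set set \<Rightarrow> ('a \<Rightarrow> real) \<Rightarrow> bool" where
  "bornological_fun B s \<longleftrightarrow> (\<forall>b\<in>B. \<exists>R. \<forall>x\<in>b. s x \<le> R)"

definition controlled_fun :: "('a \<times> 'a) set set \<Rightarrow> ('a \<Rightarrow> real) \<Rightarrow> bool" where
  "controlled_fun C s \<longleftrightarrow> (\<forall>W\<in>C. \<exists>c. \<forall>(x, x') \<in> W. \<bar>s x - s x'\<bar> \<le> c)"

end

theory Submission
  imports Defs
begin


lemma cmap_cmult:
  "continuous_map X euclidean f \<Longrightarrow> continuous_map X euclidean g
   \<Longrightarrow> continuous_map X euclidean (\<lambda>x. f x * (g x :: complex))"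
  by (simp add: continuous_map_atin tendsto_mult)

lemma closedin_eq_family:
  fixes f g :: "'i \<Rightarrow> 'x \<Rightarrow> complex"
  assumes "\<And>i. i \<in> I \<Longrightarrow> continuous_map X euclidean (f i)"
    and "\<And>i. i \<in> I \<Longrightarrow> continuous_map X euclidean (g i)"
  shows "closedin X {x \<in> topspace X. \<forall>i\<in>I. f i x = g i x}"
proof (cases "I = {}")
  case True then show ?thesis by simp
next
  case False
  have c: "closedin X {x \<in> topspace X. (\<lambda>x. f i x - g i x) x \<in> {0}}" if "i \<in> I" for i
    by (rule closedin_continuous_map_preimage) (auto intro: continuous_map_diff assms that)
  have "{x \<in> topspace X. \<forall>i\<in>I. f i x = g i x} = (\<Inter>i\<in>I. {x \<in> topspace X. (\<lambda>x. f i x - g i x) x \<in> {0}})"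
    using False by auto
  then show ?thesis using c False by (simp add: closedin_INT)
qed

lemma bornology_finite_choice:
  assumes "bornology B" "finite F" "\<forall>N\<in>F. \<exists>b\<in>B. Q N b"
    and "\<And>N b b'. b \<subseteq> b' \<Longrightarrow> Q N b \<Longrightarrow> Q N b'"
  shows "\<exists>b\<in>B. \<forall>N\<in>F. Q N b"
  using assms(2,3)
proof (induction F rule: finite_induct)
  case empty
  then show ?case using assms(1) unfolding bornology_def by blast
next
  case (insert N F)
  then obtain b1 where b1: "b1 \<in> B" "Q N b1" by auto
  from insert obtain b2 where b2: "b2 \<in> B" "\<forall>N\<in>F. Q N b2" by auto
  have "b1 \<union> b2 \<in> B" using assms(1) b1 b2 unfolding bornology_def by blast
  moreover have "\<forall>N'\<in>insert N F. Q N' (b1 \<union> b2)"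
    using b1 b2 assms(4) by (metis Un_upper1 Un_upper2 insert_iff)
  ultimately show ?case by blast
qed

lemma char_bound:
  assumes A: "closed_unital_subalgebra A" and phi: "\<phi> \<in> characters A" and f: "f \<in> A"
    and M: "\<forall>x. cmod (f x) \<le> M"
  shows "cmod (\<phi> f) \<le> M"
proof (rule ccontr)
  assume "\<not> cmod (\<phi> f) \<le> M"
  define l where "l = \<phi> f"
  have lM: "M < cmod l" using \<open>\<not> _\<close> l_def by simp
  have M0: "0 \<le> M" using M[rule_format, of undefined] norm_ge_zero[of "f undefined"] by linarith
  have l0: "l \<noteq> 0" using lM M0 by auto
  have fne: "f x \<noteq> l" for x using M[rule_format, of x] lM by auto
  have one: "(\<lambda>_. 1) \<in> A" and add: "\<And>f g. f \<in> A \<Longrightarrow> g \<in> A \<Longrightarrow> (\<lambda>x. f x + g x) \<in> A"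
    and mul: "\<And>f g. f \<in> A \<Longrightarrow> g \<in> A \<Longrightarrow> (\<lambda>x. f x * g x) \<in> A"
    and smul: "\<And>c f. f \<in> A \<Longrightarrow> (\<lambda>x. c * f x) \<in> A"
    and clos: "\<And>f. (\<forall>\<epsilon>>0. \<exists>g\<in>A. \<forall>x. cmod (f x - g x) \<le> \<epsilon>) \<Longrightarrow> f \<in> A"
    using A unfolding closed_unital_subalgebra_def by blast+
  have pow: "(\<lambda>x. f x ^ n) \<in> A" for n
  proof (induction n)
    case 0 then show ?case using one by simp
  next
    case (Suc n)
    from mul[OF f Suc] show ?case by simp
  qed
  define gN where "gN n = (\<lambda>x. \<Sum>i<n. (- 1 / l) * (f x / l) ^ i)" for n
  have gA: "gN n \<in> A" for n
  proof (induction n)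
    case 0
    have "(\<lambda>x. 0 * 1) \<in> A" using smul[OF one] by blast
    then show ?case by (simp add: gN_def)
  next
    case (Suc n)
    have "(\<lambda>x. ((- 1 / l) / l ^ n) * f x ^ n) \<in> A" using smul[OF pow] by blast
    from add[OF Suc this] have "(\<lambda>x. gN n x + ((- 1 / l) / l ^ n) * f x ^ n) \<in> A" .
    moreover have "(\<lambda>x. gN n x + ((- 1 / l) / l ^ n) * f x ^ n) = gN (Suc n)"
      by (auto simp: gN_def power_divide)
    ultimately show ?case by simp
  qed
  define h where "h = (\<lambda>x. 1 / (f x - l))"
  define rho where "rho = M / cmod l"
  have rho0: "0 \<le> rho" and rho1: "rho < 1" using M0 lM by (auto simp: rho_def divide_less_eq)
  have err: "cmod (h x - gN n x) \<le> rho ^ n / (cmod l - M)" for x n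
  proof -
    define q where "q = f x / l"
    have q1: "q \<noteq> 1" using fne l0 by (auto simp: q_def)
    have qb: "cmod q \<le> rho" using M[rule_format, of x] l0 by (auto simp: q_def rho_def norm_divide divide_right_mono)
    have g: "gN n x = (- 1 / l) * ((1 - q ^ n) / (1 - q))"
    proof -
      have "gN n x = (- 1 / l) * (\<Sum>i<n. q ^ i)"
        unfolding gN_def q_def by (rule sum_distrib_left[symmetric])
      also have "(\<Sum>i<n. q ^ i) = (1 - q ^ n) / (1 - q)" using q1 by (simp add: sum_gp_strict)
      finally show ?thesis .
    qed
    have hx: "h x = (- 1 / l) / (1 - q)"
      using l0 fne[of x] by (simp add: h_def q_def field_simps)
    have "h x - gN n x = q ^ n * h x"
    proof -
      have q1': "1 - q \<noteq> 0" using q1 by simp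
      have "h x - gN n x = (- 1 / l) * ((1 - (1 - q ^ n)) / (1 - q))"
        unfolding g hx by (simp add: diff_divide_distrib right_diff_distrib)
      also have "\<dots> = q ^ n * ((- 1 / l) / (1 - q))" by simp
      finally show ?thesis unfolding hx .
    qed
    then have "cmod (h x - gN n x) = cmod q ^ n * cmod (h x)" by (simp add: norm_mult norm_power)
    also have "cmod (h x) \<le> 1 / (cmod l - M)"
    proof -
      have "cmod l - M \<le> cmod (f x - l)"
        using M[rule_format, of x] norm_triangle_ineq2[of l "f x"] by (simp add: norm_minus_commute)
      then show ?thesis using lM by (simp add: h_def norm_divide frac_le)
    qed
    then have "cmod q ^ n * cmod (h x) \<le> rho ^ n * (1 / (cmod l - M))"
      using rho0 by (intro mult_mono power_mono qb) auto
    finally show ?thesis by simp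
  qed
  have hA: "h \<in> A"
  proof (rule clos, intro allI impI)
    fix e :: real assume e: "e > 0"
    obtain n where n: "rho ^ n < e * (cmod l - M)"
      using real_arch_pow_inv[of "e * (cmod l - M)" rho] e lM rho1 by auto
    have "rho ^ n / (cmod l - M) \<le> e" using n lM by (simp add: divide_le_eq)
    then show "\<exists>g\<in>A. \<forall>x. cmod (h x - g x) \<le> e" using err gA by (meson order_trans)
  qed
  have cA: "(\<lambda>x. (- l) * 1) \<in> A" using smul[OF one] .
  have FA: "(\<lambda>x. f x + (- l) * 1) \<in> A" using add[OF f cA] by simp
  have ph: "\<phi> (\<lambda>_. 1) = 1"
    and padd: "\<And>f g. f \<in> A \<Longrightarrow> g \<in> A \<Longrightarrow> \<phi> (\<lambda>x. f x + g x) = \<phi> f + \<phi> g"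
    and pmul: "\<And>f g. f \<in> A \<Longrightarrow> g \<in> A \<Longrightarrow> \<phi> (\<lambda>x. f x * g x) = \<phi> f * \<phi> g"
    and psmul: "\<And>c f. f \<in> A \<Longrightarrow> \<phi> (\<lambda>x. c * f x) = c * \<phi> f"
    using phi unfolding characters_def by blast+
  have "\<phi> (\<lambda>x. (- l) * 1) = - l" using psmul[OF one, of "- l"] ph by simp
  then have F0: "\<phi> (\<lambda>x. f x + (- l) * 1) = 0" using padd[OF f cA] l_def by simp
  have "(\<lambda>x. (f x + (- l) * 1) * h x) = (\<lambda>_. 1)"
    using fne by (auto simp: h_def)
  then have "\<phi> (\<lambda>_. 1) = 0" using pmul[OF FA hA] F0 by simp
  then show False using ph by simp
qed
lemma topspace_gelfand: "topspace (gelfand_top A) = characters A"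
proof -
  have "characters A \<subseteq> PiE A (\<lambda>_. UNIV)" unfolding characters_def by blast
  then show ?thesis unfolding gelfand_top_def topspace_subtopology topspace_product_topology topspace_euclidean by blast
qed

lemma compact_gelfand:
  assumes "higson_dominated C B A" shows "compact_space (gelfand_top A)"
proof -
  let ?P = "product_topology (\<lambda>_. euclidean) A :: (('a \<Rightarrow> complex) \<Rightarrow> complex) topology"
  have A: "closed_unital_subalgebra A" and bnd: "\<forall>f\<in>A. bounded_fun f"
    using assms unfolding higson_dominated_def linfty_higson_def by auto
  have one: "(\<lambda>_. 1) \<in> A" and add: "\<And>f g. f \<in> A \<Longrightarrow> g \<in> A \<Longrightarrow> (\<lambda>x. f x + g x) \<in> A"
    and mul: "\<And>f g. f \<in> A \<Longrightarrow> g \<in> A \<Longrightarrow> (\<lambda>x. f x * g x) \<in> A"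
    and smul: "\<And>c f. f \<in> A \<Longrightarrow> (\<lambda>x. c * f x) \<in> A"
    using A unfolding closed_unital_subalgebra_def by blast+
  have "\<forall>f\<in>A. \<exists>M. \<forall>x. cmod (f x) \<le> M" using bnd unfolding bounded_fun_def by blast
  then obtain Mf where Mf0: "\<forall>f\<in>A. \<forall>x. cmod (f x) \<le> Mf f" by (rule bchoice[elim_format]) blast
  have Mf: "\<forall>x. cmod (f x) \<le> Mf f" if "f \<in> A" for f using Mf0 that by blast
  have sub: "characters A \<subseteq> PiE A (\<lambda>f. cball 0 (Mf f))"
  proof
    fix \<phi> assume phi: "\<phi> \<in> characters A"
    then have "\<phi> \<in> PiE A (\<lambda>_. UNIV)" unfolding characters_def by blast
    moreover have "\<phi> f \<in> cball 0 (Mf f)" if "f \<in> A" for f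
      using char_bound[OF A phi that Mf[OF that]] by simp
    ultimately show "\<phi> \<in> PiE A (\<lambda>f. cball 0 (Mf f))" by (auto simp: PiE_iff)
  qed
  have cpt: "compactin ?P (PiE A (\<lambda>f. cball 0 (Mf f)))" by (simp add: compactin_PiE)
  have proj: "continuous_map ?P euclidean (\<lambda>\<phi>. \<phi> h)" if "h \<in> A" for h
    using continuous_map_product_projection[OF that] .
  have S1: "closedin ?P {\<phi> \<in> topspace ?P. \<forall>i\<in>{()}. \<phi> (\<lambda>_. 1) = 1}"
    using closedin_eq_family[of "{()}" ?P "\<lambda>i \<phi>. \<phi> (\<lambda>_. 1)" "\<lambda>i \<phi>. 1"] proj[OF one] by simp
  have S2: "closedin ?P {\<phi> \<in> topspace ?P. \<forall>i\<in>A \<times> A. \<phi> (\<lambda>x. fst i x + snd i x) = \<phi> (fst i) + \<phi> (snd i)}"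
    by (rule closedin_eq_family) (auto intro!: proj add continuous_map_add)
  have S3: "closedin ?P {\<phi> \<in> topspace ?P. \<forall>i\<in>A \<times> A. \<phi> (\<lambda>x. fst i x * snd i x) = \<phi> (fst i) * \<phi> (snd i)}"
    by (rule closedin_eq_family) (auto intro!: proj mul cmap_cmult)
  have S4: "closedin ?P {\<phi> \<in> topspace ?P. \<forall>i\<in>UNIV \<times> A. \<phi> (\<lambda>x. fst i * snd i x) = fst i * \<phi> (snd i)}"
  proof (rule closedin_eq_family)
    fix i :: "complex \<times> ('a \<Rightarrow> complex)" assume i: "i \<in> UNIV \<times> A"
    show "continuous_map ?P euclidean (\<lambda>\<phi>. \<phi> (\<lambda>x. fst i * snd i x))"
      using i by (intro proj smul) auto
    show "continuous_map ?P euclidean (\<lambda>\<phi>. fst i * \<phi> (snd i))"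
      using i by (intro cmap_cmult[OF continuous_map_canonical_const] proj) auto
  qed
  have "characters A = {\<phi> \<in> topspace ?P. \<forall>i\<in>{()}. \<phi> (\<lambda>_. 1) = 1}
     \<inter> {\<phi> \<in> topspace ?P. \<forall>i\<in>A \<times> A. \<phi> (\<lambda>x. fst i x + snd i x) = \<phi> (fst i) + \<phi> (snd i)}
     \<inter> {\<phi> \<in> topspace ?P. \<forall>i\<in>A \<times> A. \<phi> (\<lambda>x. fst i x * snd i x) = \<phi> (fst i) * \<phi> (snd i)}
     \<inter> {\<phi> \<in> topspace ?P. \<forall>i\<in>UNIV \<times> A. \<phi> (\<lambda>x. fst i * snd i x) = fst i * \<phi> (snd i)}"
    unfolding characters_def topspace_product_topology topspace_euclidean split_paired_Ball_Sigma fst_conv snd_conv by blast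
  then have cl: "closedin ?P (characters A)" using S1 S2 S3 S4 by (simp only:) (intro closedin_Int)
  have "compactin ?P (characters A)" by (rule closed_compactin[OF cpt sub cl])
  then show ?thesis
    unfolding compact_space_def topspace_gelfand unfolding gelfand_top_def compactin_subtopology by simp
qed



lemma ball_image_pairs:
  assumes "\<forall>(a, a')\<in>W. Q (fst (psi a)) (snd (psi a)) (fst (psi a')) (snd (psi a'))"
  shows "\<forall>((t, y), (t', y')) \<in> (\<lambda>(a, b). (psi a, psi b)) ` W. Q t y t' y'"
  using assms by (auto simp: case_prod_beta)

theorem lemma3p21:
  fixes C :: "('a \<times> 'a) set set" and B :: "'a set set"
    and A :: "('a \<Rightarrow> complex) set"
    and U :: "(('a \<Rightarrow> complex) \<Rightarrow> complex) set"
    and r :: "(('a \<Rightarrow> complex) \<Rightarrow> complex) \<Rightarrow> (('a \<Rightarrow> complex) \<Rightarrow> complex)"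
    and s :: "'a \<Rightarrow> real"
    and y0 :: "('a \<Rightarrow> complex) \<Rightarrow> complex"
  assumes "bornological_coarse_space C B"
    and "higson_dominated C B A"
    and "nbhd_in (gelfand_top A) (boundary A B) U"
    and "continuous_map (subtopology (gelfand_top A) U) (subtopology (gelfand_top A) (boundary A B)) r"
    and "\<forall>y\<in>boundary A B. r y = y"
    and "\<forall>x. s x \<ge> 0"
    and "proper_fun B s" and "bornological_fun B s" and "controlled_fun C s"
    and "y0 \<in> boundary A B"
  shows "bc_morphism C B
           (cone_carrier (subtopology (gelfand_top A) (boundary A B)))
           (cone_coarse (subtopology (gelfand_top A) (boundary A B)))
           (cone_bornology (subtopology (gelfand_top A) (boundary A B)))
           (\<lambda>x. if eval_char A x \<in> U then (s x, r (eval_char A x)) else (s x, y0))"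
proof -
  let ?T = "gelfand_top A"
  let ?Y = "boundary A B"
  let ?TY = "subtopology ?T ?Y"
  let ?p = "eval_char A"
  define psi where "psi = (\<lambda>x. if eval_char A x \<in> U then (s x, r (eval_char A x)) else (s x, y0))"
  have bornB: "bornology B" using assms(1) unfolding bornological_coarse_space_def by blast
  have Acl: "closed_unital_subalgebra A" and vanA: "linfty_vanish B \<subseteq> A" and Ahig: "A \<subseteq> linfty_higson C B"
    using assms(2) unfolding higson_dominated_def by blast+
  have one: "(\<lambda>_. 1) \<in> A" and add: "\<And>f g. f \<in> A \<Longrightarrow> g \<in> A \<Longrightarrow> (\<lambda>x. f x + g x) \<in> A"
    and mul: "\<And>f g. f \<in> A \<Longrightarrow> g \<in> A \<Longrightarrow> (\<lambda>x. f x * g x) \<in> A"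
    and smul: "\<And>c f. f \<in> A \<Longrightarrow> (\<lambda>x. c * f x) \<in> A"
    using Acl unfolding closed_unital_subalgebra_def by blast+
  have topT: "topspace ?T = characters A" by (rule topspace_gelfand)
  have Ych: "?Y \<subseteq> characters A" unfolding boundary_def by blast
  have topTY: "topspace ?TY = ?Y" using Ych topT by (simp add: Int_absorb1)
  have pch: "?p x \<in> characters A" for x
  proof -
    have "restrict (\<lambda>f. f x) A \<in> PiE A (\<lambda>_. UNIV)" by simp
    then show ?thesis unfolding characters_def eval_char_def using one add mul smul by simp
  qed
  have papp: "f \<in> A \<Longrightarrow> ?p x f = f x" for f x by (simp add: eval_char_def)
  obtain Op where Oop: "openin ?T Op" and YO: "?Y \<subseteq> Op" and OU: "Op \<subseteq> U"
    using assms(3) unfolding nbhd_in_def by blast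
  have UT: "U \<subseteq> topspace ?T" using assms(3) unfolding nbhd_in_def by blast
  have rY: "r \<phi> \<in> ?Y" if "\<phi> \<in> U" for \<phi>
  proof -
    have "r ` topspace (subtopology ?T U) \<subseteq> topspace ?TY"
      by (rule continuous_map_image_subset_topspace[OF assms(4)])
    moreover have "\<phi> \<in> topspace (subtopology ?T U)" using that UT by (simp add: subset_iff)
    ultimately have "r \<phi> \<in> topspace ?TY" by blast
    then show ?thesis using topTY by simp
  qed
  have psiU: "?p x \<in> U \<Longrightarrow> psi x = (s x, r (?p x))" for x by (simp add: psi_def)
  have fstpsi: "fst (psi x) = s x" for x by (simp add: psi_def)
  have carrier: "psi x \<in> cone_carrier ?TY" for x
    using assms(6,10) rY unfolding cone_carrier_def topTY psi_def by auto
  have "bc_morphism C B (cone_carrier ?TY) (cone_coarse ?TY) (cone_bornology ?TY) psi"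
    unfolding bc_morphism_def
  proof (intro conjI ballI allI)
    fix x show "psi x \<in> cone_carrier ?TY" by (rule carrier)
  next
    fix b assume "b \<in> cone_bornology ?TY"
    then obtain R where R: "b \<subseteq> {0..R} \<times> topspace ?TY" unfolding cone_bornology_def by blast
    have "psi -` b \<subseteq> {x. s x \<le> R}"
    proof
      fix x assume "x \<in> psi -` b"
      then have "psi x \<in> {0..R} \<times> topspace ?TY" using R by auto
      then show "x \<in> {x. s x \<le> R}" using fstpsi[of x] by (cases "psi x") auto
    qed
    moreover have "{x. s x \<le> R} \<in> B" using assms(7) unfolding proper_fun_def by blast
    ultimately show "psi -` b \<in> B" using bornB unfolding bornology_def by blast
  next
    fix W assume W: "W \<in> C"
    show "(\<lambda>(a, b). (psi a, psi b)) ` W \<in> cone_coarse ?TY"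
      unfolding cone_coarse_def mem_Collect_eq
    proof (intro conjI)
      show "(\<lambda>(a, b). (psi a, psi b)) ` W \<subseteq> cone_carrier ?TY \<times> cone_carrier ?TY"
        using carrier by auto
    next
      obtain c where c: "\<forall>(x, x') \<in> W. \<bar>s x - s x'\<bar> \<le> c"
        using assms(9) W unfolding controlled_fun_def by blast
      have "\<forall>((t, y), (t', y')) \<in> (\<lambda>(a, b). (psi a, psi b)) ` W. \<bar>t - t'\<bar> \<le> c"
        by (rule ball_image_pairs) (use c fstpsi in auto)
      then show "\<exists>c. \<forall>((t, y), (t', y')) \<in> (\<lambda>(a, b). (psi a, psi b)) ` W. \<bar>t - t'\<bar> \<le> c" by blast
    next
      show "\<forall>V\<in>diag_nbhds ?TY. \<exists>S. \<forall>((t, y), (t', y')) \<in> (\<lambda>(a, b). (psi a, psi b)) ` W.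
              t \<ge> S \<and> t' \<ge> S \<longrightarrow> (y, y') \<in> V"
      proof
        fix V assume "V \<in> diag_nbhds ?TY"
        then obtain V0 where V0op: "openin (prod_topology ?TY ?TY) V0" and V0d: "Id_on ?Y \<subseteq> V0"
          and V0V: "V0 \<subseteq> V"
          unfolding diag_nbhds_def nbhd_in_def topTY by blast
        have key: "\<exists>b\<in>B. \<forall>x x'. (x, x') \<in> W \<and> x \<notin> b \<and> x' \<notin> b \<longrightarrow>
                     ?p x \<in> Op \<and> ?p x' \<in> Op \<and> (r (?p x), r (?p x')) \<in> V0"
        proof -
          let ?PP = "prod_topology ?T ?T"
          define G where "G = {z \<in> topspace ?PP. fst z \<in> Op \<and> snd z \<in> Op \<and> (r (fst z), r (snd z)) \<in> V0}"
          have OpT: "Op \<subseteq> topspace ?T" using Oop by (rule openin_subset)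
          have cr: "continuous_map (subtopology ?T Op) ?TY r"
            by (rule continuous_map_from_subtopology_mono[OF assms(4) OU])
          have cPhi: "continuous_map (subtopology ?PP (Op \<times> Op)) (prod_topology ?TY ?TY) (\<lambda>z. (r (fst z), r (snd z)))"
            unfolding subtopology_Times continuous_map_paired
            using continuous_map_compose[OF continuous_map_fst cr] continuous_map_compose[OF continuous_map_snd cr]
            by (simp add: o_def, blast)
          have "openin (subtopology ?PP (Op \<times> Op))
                  {z \<in> topspace (subtopology ?PP (Op \<times> Op)). (r (fst z), r (snd z)) \<in> V0}"
            by (rule openin_continuous_map_preimage[OF cPhi V0op])
          moreover have "openin ?PP (Op \<times> Op)" by (simp add: openin_prod_Times_iff Oop)
          ultimately have "openin ?PP {z \<in> topspace (subtopology ?PP (Op \<times> Op)). (r (fst z), r (snd z)) \<in> V0}"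
            by (rule openin_trans_full)
          moreover have "{z \<in> topspace (subtopology ?PP (Op \<times> Op)). (r (fst z), r (snd z)) \<in> V0} = G"
            unfolding G_def topspace_subtopology by auto
          ultimately have Gop: "openin ?PP G" by simp
          have cT: "compact_space ?T" by (rule compact_gelfand[OF assms(2)])
          have cPP: "compact_space ?PP" using cT by (simp add: compact_space_prod_topology)
          define K where "K = topspace ?PP - G"
          have Kc: "compactin ?PP K"
            using closed_compactin[of ?PP "topspace ?PP" K] cPP closedin_diff[OF closedin_topspace Gop]
            unfolding K_def compact_space_def by blast
          define N1 where "N1 f d = {z \<in> topspace ?PP. d < cmod (fst z f - snd z f)}" for f d
          define N2 where "N2 g d = {z \<in> topspace ?PP. d < cmod (fst z g)}" for g d
          define NN where "NN = {N1 f d | f d. f \<in> A \<and> d > 0} \<union> {N2 g d | g d. g \<in> linfty_vanish B \<and> d > 0}"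
          have projT: "continuous_map ?T euclidean (\<lambda>\<phi>. \<phi> f)" if "f \<in> A" for f
            unfolding gelfand_top_def
            by (rule continuous_map_from_subtopology[OF continuous_map_product_projection[OF that]])
          have c1: "continuous_map ?PP euclidean (\<lambda>z. fst z f)" if "f \<in> A" for f
            using continuous_map_compose[OF continuous_map_fst projT[OF that]] by (simp add: o_def)
          have c2: "continuous_map ?PP euclidean (\<lambda>z. snd z f)" if "f \<in> A" for f
            using continuous_map_compose[OF continuous_map_snd projT[OF that]] by (simp add: o_def)
          have opgt: "openin euclidean {d<..}" for d :: real by simp
          have N1op: "openin ?PP (N1 f d)" if "f \<in> A" for f d
          proof -
            have "continuous_map ?PP euclidean (\<lambda>z. cmod (fst z f - snd z f))"
              by (rule continuous_map_norm[OF continuous_map_diff[OF c1[OF that] c2[OF that]]])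
            from openin_continuous_map_preimage[OF this opgt[of d]] show ?thesis
              by (simp add: N1_def)
          qed
          have N2op: "openin ?PP (N2 g d)" if "g \<in> A" for g d
          proof -
            have "continuous_map ?PP euclidean (\<lambda>z. cmod (fst z g))"
              by (rule continuous_map_norm[OF c1[OF that]])
            from openin_continuous_map_preimage[OF this opgt[of d]] show ?thesis
              by (simp add: N2_def)
          qed
          have NNop: "\<forall>N\<in>NN. openin ?PP N" unfolding NN_def using N1op N2op vanA by blast
          have cover: "K \<subseteq> \<Union>NN"
          proof
            fix z assume zK: "z \<in> K"
            obtain \<phi> \<phi>' where z: "z = (\<phi>, \<phi>')" by (cases z)
            have ph: "\<phi> \<in> characters A" "\<phi>' \<in> characters A" using zK z topT unfolding K_def by auto
            have nG: "z \<notin> G" using zK unfolding K_def by blast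
            show "z \<in> \<Union>NN"
            proof (cases "\<phi> = \<phi>'")
              case True
              have "\<phi> \<notin> ?Y"
              proof
                assume Y: "\<phi> \<in> ?Y"
                then have "\<phi> \<in> Op" "r \<phi> = \<phi>" using YO assms(5) by auto
                moreover have "(\<phi>, \<phi>) \<in> V0" using V0d Y by auto
                ultimately have "z \<in> G" using z True ph topT unfolding G_def by auto
                then show False using nG by blast
              qed
              then obtain g where g: "g \<in> linfty_vanish B" "\<phi> g \<noteq> 0"
                using ph(1) unfolding boundary_def by blast
              define d where "d = cmod (\<phi> g) / 2"
              have d: "d > 0" using g(2) by (simp add: d_def)
              have "z \<in> N2 g d" using z ph topT g(2) unfolding N2_def d_def by auto
              moreover have "N2 g d \<in> NN" using g(1) d unfolding NN_def by blast
              ultimately show ?thesis by blast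
            next
              case False
              have "\<phi> \<in> PiE A (\<lambda>_. UNIV)" "\<phi>' \<in> PiE A (\<lambda>_. UNIV)" using ph unfolding characters_def by blast+
              then obtain f where f: "f \<in> A" "\<phi> f \<noteq> \<phi>' f" using False PiE_ext by metis
              define d where "d = cmod (\<phi> f - \<phi>' f) / 2"
              have d: "d > 0" using f(2) by (simp add: d_def)
              have "z \<in> N1 f d" using z ph topT f(2) unfolding N1_def d_def by auto
              moreover have "N1 f d \<in> NN" using f(1) d unfolding NN_def by blast
              ultimately show ?thesis by blast
            qed
          qed
          obtain F where F: "finite F" "F \<subseteq> NN" "K \<subseteq> \<Union>F"
            using Kc NNop cover unfolding compactin_def by meson
          have each: "\<forall>N\<in>F. \<exists>b\<in>B. (\<forall>x x'. (x, x') \<in> W \<and> x \<notin> b \<and> x' \<notin> b \<longrightarrow> (?p x, ?p x') \<notin> N)"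
          proof
            fix N assume "N \<in> F"
            then have "N \<in> NN" using F(2) by blast
            then consider (n1) f d where "N = N1 f d" "f \<in> A" "d > 0"
              | (n2) g d where "N = N2 g d" "g \<in> linfty_vanish B" "d > 0"
              unfolding NN_def by blast
            then show "\<exists>b\<in>B. (\<forall>x x'. (x, x') \<in> W \<and> x \<notin> b \<and> x' \<notin> b \<longrightarrow> (?p x, ?p x') \<notin> N)"
            proof cases
              case n1
              have "f \<in> linfty_higson C B" using Ahig n1(2) by blast
              then obtain b where b: "b \<in> B"
                and hb: "\<forall>x x'. (x, x') \<in> W \<and> x \<notin> b \<and> x' \<notin> b \<longrightarrow> cmod (f x - f x') \<le> d"
                using W n1(3) unfolding linfty_higson_def by blast
              have "(?p x, ?p x') \<notin> N" if "(x, x') \<in> W" "x \<notin> b" "x' \<notin> b" for x x'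
                using hb that papp[OF n1(2)] unfolding n1(1) N1_def by force
              then show ?thesis using b by blast
            next
              case n2
              then have gA: "g \<in> A" using vanA by blast
              obtain b where b: "b \<in> B" and hb: "\<forall>x. x \<notin> b \<longrightarrow> cmod (g x) \<le> d"
                using n2(2,3) unfolding linfty_vanish_def by blast
              have "(?p x, ?p x') \<notin> N" if "(x, x') \<in> W" "x \<notin> b" "x' \<notin> b" for x x'
                using hb that papp[OF gA] unfolding n2(1) N2_def by force
              then show ?thesis using b by blast
            qed
          qed
          obtain b where b: "b \<in> B"
            and hb: "\<forall>N\<in>F. \<forall>x x'. (x, x') \<in> W \<and> x \<notin> b \<and> x' \<notin> b \<longrightarrow> (?p x, ?p x') \<notin> N"
            using bornology_finite_choice[OF bornB F(1) each] by blast
          have "?p x \<in> Op \<and> ?p x' \<in> Op \<and> (r (?p x), r (?p x')) \<in> V0"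
            if "(x, x') \<in> W" "x \<notin> b" "x' \<notin> b" for x x'
          proof -
            have "(?p x, ?p x') \<notin> \<Union>F" using hb that by blast
            then have "(?p x, ?p x') \<notin> K" using F(3) by blast
            moreover have "(?p x, ?p x') \<in> topspace ?PP" using pch topT by simp
            ultimately have "(?p x, ?p x') \<in> G" unfolding K_def by blast
            then show ?thesis unfolding G_def by simp
          qed
          then show ?thesis using b by blast
        qed
        then obtain b where b: "b \<in> B" and bk: "\<forall>x x'. (x, x') \<in> W \<and> x \<notin> b \<and> x' \<notin> b \<longrightarrow>
                     ?p x \<in> Op \<and> ?p x' \<in> Op \<and> (r (?p x), r (?p x')) \<in> V0" by blast
        obtain R where R: "\<forall>x\<in>b. s x \<le> R" using assms(8) b unfolding bornological_fun_def by blast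
        have "\<forall>((t, y), (t', y')) \<in> (\<lambda>(a, b). (psi a, psi b)) ` W. t \<ge> R + 1 \<and> t' \<ge> R + 1 \<longrightarrow> (y, y') \<in> V"
        proof -
          have H: "R + 1 \<le> fst (psi a) \<and> R + 1 \<le> fst (psi a') \<longrightarrow> (snd (psi a), snd (psi a')) \<in> V"
            if aa: "(a, a') \<in> W" for a a'
          proof
            assume ge: "R + 1 \<le> fst (psi a) \<and> R + 1 \<le> fst (psi a')"
            then have "a \<notin> b" "a' \<notin> b" using R fstpsi by force+
            then have *: "?p a \<in> Op" "?p a' \<in> Op" "(r (?p a), r (?p a')) \<in> V0" using bk aa by blast+
            then have "psi a = (s a, r (?p a))" "psi a' = (s a', r (?p a'))" using psiU OU by blast+
            then show "(snd (psi a), snd (psi a')) \<in> V" using *(3) V0V by auto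
          qed
          show ?thesis using H by (intro ball_image_pairs) blast
        qed
        then show "\<exists>S. \<forall>((t, y), (t', y')) \<in> (\<lambda>(a, b). (psi a, psi b)) ` W.
              t \<ge> S \<and> t' \<ge> S \<longrightarrow> (y, y') \<in> V" by blast
      qed
    qed
  qed
  then show ?thesis unfolding psi_def .
qed

end
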